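(* Let $\theta>0$ and $\beta\in(0,1]$, let $\mathfrak{g}(x)=x^\beta$ and $\mathfrak{h}(x)=\frac{1}{\log^{\theta}(1/x)}$ (for small $x>0$, with $\mathfrak h(0)=0$). If $E\subseteq\mathbb{R}^2$ is an $F_{\mathfrak{h}\mathfrak{g}}$-set, then $\dim(E)\ge\frac{\beta}{2}$.
   Context: $\dim$ denotes Hausdorff dimension. For a non-decreasing $h$ with $h(0)=0$, $F\subseteq\mathbb{R}^n$, $\delta>0$: $\mathcal{H}^h_\delta(F)=\inf\{\sum_i h(\mathrm{diam}(F_i)): F\subseteq\bigcup_i F_i,\ \mathrm{diam}(F_i)<\delta\}$ and $\mathcal{H}^h(F)=\sup_{\delta>0}\mathcal{H}^h_\delta(F)$. $\mathbb{S}$ is the unit circle. A set $E\subseteq\mathbb{R}^2$ is an $F_{\mathfrak{h}\mathfrak{g}}$-set if there is $L\subseteq\mathbb{S}$ with $\mathcal{H}^{\mathfrak{g}}(L)>0$ and a number $\delta_E>0$ such that for each $e\in L$ there is a line segment $\ell_e$ in direction $e$ with $\mathcal{H}^{\mathfrak{h}}_\delta(\ell_e\cap E)>1$ for all $0<\delta<\delta_E$. *)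

theory Defs
  imports "HOL-Analysis.Analysis"
begin

text \<open>Hausdorff delta-content with gauge h: infimum over countable covers by sets of
  diameter less than delta (bounded sets, so that diameter is the true diameter;
  finite covers are included by padding with empty sets).\<close>
definition hausdorff_content :: "(real \<Rightarrow> real) \<Rightarrow> real \<Rightarrow> 'a::metric_space set \<Rightarrow> ennreal" where
  "hausdorff_content h \<delta> F =
     (INF C \<in> {C :: nat \<Rightarrow> 'a set. F \<subseteq> (\<Union>i. C i) \<and> (\<forall>i. bounded (C i) \<and> diameter (C i) < \<delta>)}.
        (\<Sum>i. ennreal (h (diameter (C i)))))"

definition hausdorff_measure :: "(real \<Rightarrow> real) \<Rightarrow> 'a::metric_space set \<Rightarrow> ennreal" where
  "hausdorff_measure h F = (SUP \<delta> \<in> {0<..}. hausdorff_content h \<delta> F)"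

definition hausdorff_dim :: "'a::metric_space set \<Rightarrow> real" where
  "hausdorff_dim F = Inf {s::real. 0 < s \<and> hausdorff_measure (\<lambda>x. x powr s) F = 0}"

definition F_hg_set :: "(real \<Rightarrow> real) \<Rightarrow> (real \<Rightarrow> real) \<Rightarrow> (real^2) set \<Rightarrow> bool" where
  "F_hg_set h g E \<longleftrightarrow>
     (\<exists>L. L \<subseteq> sphere 0 1 \<and> hausdorff_measure g L > 0 \<and>
        (\<exists>\<delta>E > 0. \<forall>e \<in> L. \<exists>a t. t > 0 \<and>
           (\<forall>\<delta>. 0 < \<delta> \<and> \<delta> < \<delta>E \<longrightarrow>
              hausdorff_content h \<delta> (closed_segment a (a + t *\<^sub>R e) \<inter> E) > 1)))"

end

theory Submission
  imports Defs "HOL-Real_Asymp.Real_Asymp"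
begin


lemma content_le:
  assumes "F \<subseteq> (\<Union>i. C i)" "\<And>i. bounded (C i)" "\<And>i. diameter (C i) < \<delta>"
  shows "hausdorff_content h \<delta> F \<le> (\<Sum>i. ennreal (h (diameter (C i))))"
  unfolding hausdorff_content_def using assms by (intro INF_lower) auto

lemma prod_sum_le:
  fixes F :: "nat \<times> nat \<Rightarrow> ennreal" and a b :: "nat \<Rightarrow> real"
  assumes "\<And>p q. F (p,q) \<le> ennreal (a p) * ennreal (b q)"
  shows "(\<Sum>n. F (prod_decode n)) \<le> (\<Sum>p. ennreal (a p)) * (\<Sum>q. ennreal (b q))"
proof -
  have "(\<Sum>n. F (prod_decode n)) = (\<Sum>p. \<Sum>q. F (p,q))"
    by (rule suminf_ennreal_2dimen) simp
  also have "\<dots> \<le> (\<Sum>p. \<Sum>q. ennreal (a p) * ennreal (b q))"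
    by (intro suminf_le summableI assms) 
  also have "\<dots> = (\<Sum>p. ennreal (a p)) * (\<Sum>q. ennreal (b q))"
    by simp
  finally show ?thesis .
qed

lemma unit_diff_le:
  fixes v w :: "'a::real_normed_vector"
  assumes "v \<noteq> 0" "w \<noteq> 0"
  shows "norm (v /\<^sub>R norm v - w /\<^sub>R norm w) \<le> 2 * norm (v - w) / norm v"
proof -
  have nv: "norm v > 0" using assms by simp
  have "v /\<^sub>R norm v - w /\<^sub>R norm w = (v - w) /\<^sub>R norm v + (w /\<^sub>R norm v - w /\<^sub>R norm w)"
    by (simp add: algebra_simps)
  also have "norm \<dots> \<le> norm (v - w) / norm v + norm (w /\<^sub>R norm v - w /\<^sub>R norm w)"
    by (rule order_trans[OF norm_triangle_ineq]) (simp add: divide_inverse mult.commute)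
  also have "norm (w /\<^sub>R norm v - w /\<^sub>R norm w) = \<bar>norm w - norm v\<bar> / norm v"
  proof -
    have "w /\<^sub>R norm v - w /\<^sub>R norm w = (1 / norm v - 1 / norm w) *\<^sub>R w"
      by (simp add: algebra_simps divide_inverse)
    hence "norm (w /\<^sub>R norm v - w /\<^sub>R norm w) = \<bar>1 / norm v - 1 / norm w\<bar> * norm w" by simp
    also have "\<dots> = \<bar>norm w - norm v\<bar> / norm v" using assms
      by (simp add: field_simps abs_div abs_mult)
    finally show ?thesis .
  qed
  also have "\<bar>norm w - norm v\<bar> \<le> norm (v - w)"
    by (metis abs_minus_commute norm_triangle_ineq3)
  hence "\<bar>norm w - norm v\<bar> / norm v \<le> norm (v - w) / norm v" using nv by (simp add: divide_right_mono)
  finally show ?thesis by simp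
qed



lemma norm2_le: "norm (x::real^2) \<le> \<bar>x$1\<bar> + \<bar>x$2\<bar>"
  using norm_le_l1_cart[of x] by (simp add: sum_2)

definition cellz :: "nat \<Rightarrow> int \<times> int" where
  "cellz k = (int_decode (fst (prod_decode k)), int_decode (snd (prod_decode k)))"

definition cell :: "nat \<Rightarrow> nat \<Rightarrow> nat \<Rightarrow> nat \<Rightarrow> (real^2) set" where
  "cell N k p q = (if p < N \<and> q < N then
     {x. real_of_int (fst (cellz k)) + p / N \<le> x$1 \<and> x$1 \<le> real_of_int (fst (cellz k)) + (p+1) / N \<and>
         real_of_int (snd (cellz k)) + q / N \<le> x$2 \<and> x$2 \<le> real_of_int (snd (cellz k)) + (q+1) / N} else {})"

lemma cell_cover: "N > 0 \<Longrightarrow> \<exists>p q. x \<in> cell N (prod_encode (int_encode \<lfloor>x$1\<rfloor>, int_encode \<lfloor>x$2\<rfloor>)) p q"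
proof -
  assume N: "N > 0"
  define z1 where "z1 = \<lfloor>x$1\<rfloor>"
  define z2 where "z2 = \<lfloor>x$2\<rfloor>"
  define k where "k = prod_encode (int_encode z1, int_encode z2)"
  have kz: "cellz k = (z1, z2)" by (simp add: k_def cellz_def)
  have ex: "\<exists>p<N. p / N \<le> y - \<lfloor>y\<rfloor> \<and> y - \<lfloor>y\<rfloor> \<le> (p+1)/N" for y :: real
  proof -
    define p where "p = nat \<lfloor>(y - \<lfloor>y\<rfloor>) * N\<rfloor>"
    have f0: "0 \<le> y - \<lfloor>y\<rfloor>" "y - \<lfloor>y\<rfloor> < 1" by linarith+
    hence "0 \<le> (y - \<lfloor>y\<rfloor>) * N" by simp
    hence pe: "real p = of_int \<lfloor>(y - \<lfloor>y\<rfloor>) * N\<rfloor>" by (simp add: p_def)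
    have "(y - \<lfloor>y\<rfloor>) * N < N" using f0 N by simp
    hence "real p < N" using pe by linarith
    hence "p < N" by simp
    moreover have "real p \<le> (y - \<lfloor>y\<rfloor>) * N" "(y - \<lfloor>y\<rfloor>) * N \<le> real p + 1" using pe by linarith+
    hence "p / N \<le> y - \<lfloor>y\<rfloor> \<and> y - \<lfloor>y\<rfloor> \<le> (p+1)/N" using N by (simp add: field_simps)
    ultimately show ?thesis by (intro exI[of _ p]) (simp add: add.commute)
  qed
  obtain p where p: "p < N" "p / N \<le> x$1 - z1" "x$1 - z1 \<le> (p+1)/N" using ex[of "x$1"] unfolding z1_def by blast
  obtain q where q: "q < N" "q / N \<le> x$2 - z2" "x$2 - z2 \<le> (q+1)/N" using ex[of "x$2"] unfolding z2_def by blast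
  have "x \<in> cell N k p q" using p q by (simp add: cell_def kz)
  thus ?thesis unfolding k_def z1_def z2_def by blast
qed

lemma cell_diam: "N > 0 \<Longrightarrow> bounded (cell N k p q) \<and> diameter (cell N k p q) \<le> 2 / N"
proof -
  assume N: "N > 0"
  let ?C = "cell N k p q"
  have d: "norm (x - y) \<le> 2 / N" if "x \<in> ?C" "y \<in> ?C" for x y
  proof -
    have "\<bar>(x - y)$1\<bar> \<le> 1 / N" "\<bar>(x - y)$2\<bar> \<le> 1 / N" using that N
      by (auto simp: cell_def split: if_splits simp: field_simps abs_le_iff)
    thus ?thesis using norm2_le[of "x - y"] by simp
  qed
  have "bounded ?C"
  proof (cases "?C = {}")
    case False
    then obtain y where y: "y \<in> ?C" by blast
    have "?C \<subseteq> cball y (2 / N)" using d[OF y] by (auto simp: dist_norm)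
    thus ?thesis using bounded_subset by blast
  qed simp
  moreover have "diameter ?C \<le> 2 / N" using d by (intro diameter_le) auto
  ultimately show ?thesis by blast
qed

lemma sum_finite_const:
  "(\<Sum>p. ennreal (if p < N then c else 0)) = ennreal (real N * c)" if "c \<ge> 0"
proof -
  have "(\<Sum>p. ennreal (if p < N then c else 0)) = (\<Sum>p<N. ennreal (if p < N then c else 0))"
    by (rule suminf_finite) auto
  also have "\<dots> = ennreal (real N * c)" using that by (simp add: ennreal_of_nat_eq_real_of_nat ennreal_mult')
  finally show ?thesis .
qed

lemma cell_cost:
  assumes N: "N > 0"
  shows "(\<Sum>n. ennreal (diameter (cell N k (fst (prod_decode n)) (snd (prod_decode n))) powr 3)) \<le> ennreal (8 / N)"
proof -
  define a where "a p = (if p < N then sqrt ((2 / N)^3) else 0)" for p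
  have "(\<Sum>n. ennreal (diameter (cell N k (fst (prod_decode n)) (snd (prod_decode n))) powr 3))
      \<le> (\<Sum>p. ennreal (a p)) * (\<Sum>q. ennreal (a q))"
  proof -
    let ?F = "\<lambda>pq. ennreal (diameter (cell N k (fst pq) (snd pq)) powr 3)"
    have "(\<Sum>n. ?F (prod_decode n)) \<le> (\<Sum>p. ennreal (a p)) * (\<Sum>q. ennreal (a q))"
    proof (rule prod_sum_le)
      fix p q
      show "?F (p,q) \<le> ennreal (a p) * ennreal (a q)"
      proof (cases "p < N \<and> q < N")
        case True
        have d: "diameter (cell N k p q) \<le> 2 / N" "bounded (cell N k p q)" using cell_diam[OF N] by blast+
        have "diameter (cell N k p q) powr 3 \<le> (2 / N) powr 3"
          by (intro powr_mono2) (auto simp: d diameter_ge_0)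
        also have "\<dots> = a p * a q" using True N
          by (simp add: a_def powr_realpow real_sqrt_mult[symmetric] power2_eq_square[symmetric])
        finally show ?thesis using True by (simp add: a_def ennreal_mult'[symmetric] ennreal_leI)
      next
        case False
        hence "cell N k p q = {}" by (auto simp: cell_def)
        thus ?thesis by simp
      qed
    qed
    thus ?thesis by simp
  qed
  also have "(\<Sum>p. ennreal (a p)) = ennreal (real N * sqrt ((2 / N)^3))"
    unfolding a_def by (rule sum_finite_const) simp
  also have "ennreal (real N * sqrt ((2 / N)^3)) * ennreal (real N * sqrt ((2 / N)^3))
     = ennreal (8 / N)"
  proof -
    have "(real N * sqrt ((2 / N)^3)) * (real N * sqrt ((2 / N)^3)) = real N ^ 2 * (2 / N)^3"
      by (simp add: power2_eq_square[symmetric] algebra_simps)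
    also have "\<dots> = 8 / N" using N by (simp add: power2_eq_square power3_eq_cube field_simps)
    finally show ?thesis by (simp add: ennreal_mult'[symmetric])
  qed
  finally show ?thesis .
qed

lemma dim_set_nonempty:
  fixes E :: "(real^2) set"
  shows "hausdorff_measure (\<lambda>x. x powr 3) E = 0"
proof -
  have "hausdorff_content (\<lambda>x. x powr 3) \<delta> E = 0" if "\<delta> > 0" for \<delta>
  proof -
    have "hausdorff_content (\<lambda>x. x powr 3) \<delta> E \<le> ennreal e" if e: "e > 0" for e
    proof -
      obtain M :: nat where M: "real M > max (16 / e) (2 / \<delta>)" using reals_Archimedean2 by blast
      have M1: "M > 0" using M e \<open>\<delta>>0\<close>
        by (metis less_max_iff_disj of_nat_0_less_iff divide_pos_pos zero_less_numeral order.strict_trans)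
      have Md: "2 / real M < \<delta>" using M M1 \<open>\<delta>>0\<close> by (simp add: field_simps)
      have Me: "16 / real M < e" using e M M1 by (simp add: field_simps)
      define N where "N k = M * 2^k" for k
      have N0: "N k > 0" for k using M1 by (simp add: N_def)
      define G where "G kn = cell (N (fst kn)) (fst kn) (fst (prod_decode (snd kn))) (snd (prod_decode (snd kn)))" for kn
      define C where "C i = G (prod_decode i)" for i
      have cov: "E \<subseteq> (\<Union>i. C i)"
      proof
        fix x assume "x \<in> E"
        define k where "k = prod_encode (int_encode \<lfloor>x$1\<rfloor>, int_encode \<lfloor>x$2\<rfloor>)"
        obtain p q where "x \<in> cell (N k) k p q" using cell_cover[OF N0[of k]] unfolding k_def by blast
        hence "x \<in> C (prod_encode (k, prod_encode (p, q)))" by (simp add: C_def G_def)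
        thus "x \<in> (\<Union>i. C i)" by blast
      qed
      have bd: "bounded (C i)" "diameter (C i) < \<delta>" for i
      proof -
        obtain k n where kn: "prod_decode i = (k, n)" by force
        have "N k \<ge> M" by (simp add: N_def)
        hence "2 / real (N k) \<le> 2 / M" using M1 by (simp add: frac_le)
        moreover have "bounded (C i) \<and> diameter (C i) \<le> 2 / real (N k)"
          using cell_diam[OF N0[of k]] by (simp add: C_def G_def kn)
        ultimately show "bounded (C i)" "diameter (C i) < \<delta>" using Md by auto
      qed
      have "hausdorff_content (\<lambda>x. x powr 3) \<delta> E \<le> (\<Sum>i. ennreal (diameter (C i) powr 3))"
        by (rule content_le[OF cov bd])
      also have "\<dots> = (\<Sum>k. \<Sum>n. ennreal (diameter (G (k, n)) powr 3))"
        unfolding C_def by (rule suminf_ennreal_2dimen) simp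
      also have "\<dots> \<le> (\<Sum>k. ennreal (8 / M * (1/2)^k))"
      proof (intro suminf_le summableI)
        fix k
        have "(\<Sum>n. ennreal (diameter (G (k, n)) powr 3)) \<le> ennreal (8 / N k)"
          unfolding G_def using cell_cost[OF N0[of k], of k] by simp
        also have "8 / real (N k) = 8 / M * (1/2)^k" by (simp add: N_def field_simps)
        finally show "(\<Sum>n. ennreal (diameter (G (k, n)) powr 3)) \<le> ennreal (8 / M * (1/2)^k)" .
      qed
      also have "\<dots> = ennreal (8 / M * 2)"
      proof (rule suminf_ennreal_eq)
        have g: "(\<lambda>k. (1/2::real)^k) sums 2" using geometric_sums[of "1/2::real"] by simp
        show "(\<lambda>k. 8 / real M * (1 / 2) ^ k) sums (8 / real M * 2)" by (rule sums_mult[OF g])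
      qed simp
      also have "\<dots> \<le> ennreal e" using Me by (intro ennreal_leI) simp
      finally show ?thesis .
    qed
    thus ?thesis by (metis ennreal_le_epsilon add_0 le_zero_eq)
  qed
  thus ?thesis unfolding hausdorff_measure_def by simp
qed



lemma block_bounds:
  fixes lam t :: real
  assumes "lam > 1" "t \<ge> 1"
  shows "lam ^ nat \<lfloor>ln t / ln lam\<rfloor> \<le> t \<and> t < lam ^ (nat \<lfloor>ln t / ln lam\<rfloor> + 1)"
proof -
  define y where "y = ln t / ln lam"
  define m where "m = nat \<lfloor>y\<rfloor>"
  have y0: "y \<ge> 0" using assms by (simp add: y_def)
  have my: "real m \<le> y" "y < real m + 1" using y0 by (simp_all add: m_def)
  have ty: "lam powr y = t" using assms by (simp add: y_def powr_def)
  have "lam ^ m = lam powr real m" using assms by (simp add: powr_realpow)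
  also have "\<dots> \<le> lam powr y" using assms my by (intro powr_mono) auto
  finally have 1: "lam ^ m \<le> t" using ty by simp
  have "t < lam powr (real m + 1)" unfolding ty[symmetric] using assms my by (intro powr_less_mono) auto
  also have "lam powr (real m + 1) = lam ^ (m + 1)" using assms powr_realpow[of lam "m+1"] by (simp add: add.commute)
  finally show ?thesis using 1 by (simp add: m_def y_def)
qed

lemma r0_powr_t:
  fixes r0 r :: real
  assumes "0 < r0" "r0 < 1" "0 < r"
  shows "r0 powr (ln r / ln r0) = r"
proof -
  have "ln r0 \<noteq> 0" using assms by simp
  thus ?thesis using assms by (simp add: powr_def)
qed



lemma pow_powr: "0 < (lam::real) \<Longrightarrow> (lam ^ k) powr \<theta> = (lam powr \<theta>) ^ k"
proof -
  assume l: "0 < lam"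
  have "(lam ^ k) powr \<theta> = (lam powr real k) powr \<theta>" using l by (simp add: powr_realpow)
  also have "\<dots> = (lam powr \<theta>) powr real k" by (simp add: powr_powr mult.commute)
  also have "\<dots> = (lam powr \<theta>) ^ k" using l by (simp add: powr_realpow)
  finally show ?thesis .
qed

lemma pair_bound1:
  fixes r0 ti tj s \<beta> lam :: real
  assumes r0: "0 < r0" "r0 < 1" and s: "s > 0" and lam: "lam = \<beta> / (2 * s)" "lam > 1"
    and ti: "lam ^ m \<le> ti" and tj: "tj < lam ^ (m + 1)" and le: "ti \<le> tj"
  shows "max (r0 powr ti) (r0 powr tj) powr (\<beta> / 2 + s) \<le> (r0 powr ti) powr s * (r0 powr tj) powr s"
proof -
  have mx: "max (r0 powr ti) (r0 powr tj) = r0 powr ti"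
    using powr_mono'[OF le, of r0] r0 by simp
  have "tj < lam * lam ^ m" using tj by simp
  also have "\<dots> \<le> lam * ti" using ti lam(2) by (intro mult_left_mono) auto
  finally have "tj * s \<le> lam * ti * s" using s by simp
  also have "lam * ti * s = ti * \<beta> / 2" using lam s by (simp add: field_simps)
  finally have ex: "ti * s + tj * s \<le> ti * (\<beta> / 2 + s)" by (simp add: algebra_simps)
  have "(r0 powr ti) powr (\<beta> / 2 + s) = r0 powr (ti * (\<beta> / 2 + s))" by (simp add: powr_powr)
  also have "\<dots> \<le> r0 powr (ti * s + tj * s)" using r0 ex by (intro powr_mono') auto
  also have "\<dots> = (r0 powr ti) powr s * (r0 powr tj) powr s" by (simp add: powr_powr powr_add)
  finally show ?thesis using mx by simp
qed

lemma pair_bound: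
  fixes r0 ti tj s \<beta> lam :: real
  assumes r0: "0 < r0" "r0 < 1" and s: "s > 0" and lam: "lam = \<beta> / (2 * s)" "lam > 1"
    and ti: "lam ^ m \<le> ti" "ti < lam ^ (m + 1)" and tj: "lam ^ m \<le> tj" "tj < lam ^ (m + 1)"
  shows "max (r0 powr ti) (r0 powr tj) powr (\<beta> / 2 + s) \<le> (r0 powr ti) powr s * (r0 powr tj) powr s"
proof (cases "ti \<le> tj")
  case True thus ?thesis using pair_bound1[OF r0 s lam ti(1) tj(2)] by blast
next
  case False
  hence "max (r0 powr tj) (r0 powr ti) powr (\<beta> / 2 + s) \<le> (r0 powr tj) powr s * (r0 powr ti) powr s"
    using pair_bound1[OF r0 s lam tj(1) ti(2)] by simp
  thus ?thesis by (simp add: max.commute mult.commute)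
qed

lemma main_contra:
  fixes \<theta> \<beta> s \<delta>E \<epsilon>0 :: real and h :: "real \<Rightarrow> real" and E :: "(real^2) set"
    and L :: "(real^2) set"
  assumes th: "\<theta> > 0" and b0: "0 < \<beta>" and b1: "\<beta> \<le> 1"
    and hmono: "mono_on {0..} h"
    and e0: "\<epsilon>0 > 0" and hform: "\<And>x. 0 < x \<Longrightarrow> x < \<epsilon>0 \<Longrightarrow> h x = 1 / (ln (1 / x)) powr \<theta>"
    and Lsph: "L \<subseteq> sphere 0 1" and HL: "hausdorff_measure (\<lambda>x. x powr \<beta>) L > 0"
    and dE: "\<delta>E > 0"
    and seg: "\<And>e. e \<in> L \<Longrightarrow> \<exists>a t. t > 0 \<and> (\<forall>\<delta>. 0 < \<delta> \<and> \<delta> < \<delta>E \<longrightarrow>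
              hausdorff_content h \<delta> (closed_segment a (a + t *\<^sub>R e) \<inter> E) > 1)"
    and s0: "s > 0" and sb: "s < \<beta> / 2"
    and Hs: "hausdorff_measure (\<lambda>x. x powr s) E = 0"
  shows False
proof -
  define lam where "lam = \<beta> / (2 * s)"
  define \<mu> where "\<mu> = 1 / 2 - s / \<beta>"
  have lam1: "lam > 1" using s0 sb by (simp add: lam_def field_simps)
  have mu0: "\<mu> > 0" "\<mu> < 1" using s0 sb b0 by (simp_all add: \<mu>_def field_simps)
  have key_exp: "(1 - \<mu>) * \<beta> = \<beta> / 2 + s" using b0 by (simp add: \<mu>_def field_simps)
  define q where "q = 1 / lam powr \<theta>"
  have q01: "0 < q" "q < 1" using lam1 th by (simp_all add: q_def)
  define K where "K = 1 / (1 - q)"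
  define \<delta>1 where "\<delta>1 = min \<delta>E \<epsilon>0 / 2"
  have d1: "0 < \<delta>1" "\<delta>1 < \<delta>E" "\<delta>1 < \<epsilon>0" using dE e0 by (auto simp: \<delta>1_def)
  have content0: "hausdorff_content (\<lambda>x. x powr \<beta>) \<delta>' L = 0" if dpos: "\<delta>' > 0" for \<delta>'
  proof -
    have e1: "eventually (\<lambda>r. 0 < r \<and> r < 1) (at_right (0::real))"
      using eventually_at_right_real[of 0 1] by (rule eventually_mono) auto
    have "((\<lambda>r::real. r powr \<mu>) \<longlongrightarrow> 0) (at_right 0)" using mu0 by real_asymp
    hence e2: "eventually (\<lambda>r. r powr \<mu> < \<delta>1) (at_right (0::real))" using d1(1) by (rule order_tendstoD)
    have "((\<lambda>r::real. 4 * r powr (1 - \<mu>)) \<longlongrightarrow> 0) (at_right 0)" using mu0 by real_asymp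
    hence e3: "eventually (\<lambda>r. 4 * r powr (1 - \<mu>) < \<delta>') (at_right (0::real))" using dpos by (rule order_tendstoD)
    have "filterlim (\<lambda>r::real. (\<mu> * ln (1/r)) powr \<theta>) at_top (at_right 0)" using mu0 th by real_asymp
    hence e4: "eventually (\<lambda>r. (\<mu> * ln (1/r)) powr \<theta> \<ge> K) (at_right (0::real))"
      by (simp add: filterlim_at_top)
    have ev: "eventually (\<lambda>r. (0 < r \<and> r < 1) \<and> r powr \<mu> < \<delta>1 \<and> 4 * r powr (1 - \<mu>) < \<delta>' \<and>
        (\<mu> * ln (1/r)) powr \<theta> \<ge> K) (at_right (0::real))"
      using e1 e2 e3 e4 by eventually_elim auto
    then obtain r0 where r0: "0 < r0" "r0 < 1" "r0 powr \<mu> < \<delta>1" "4 * r0 powr (1 - \<mu>) < \<delta>'"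
        "(\<mu> * ln (1/r0)) powr \<theta> \<ge> K"
    proof -
      from ev obtain b where b: "b > 0" "\<And>y. y > 0 \<Longrightarrow> y < b \<Longrightarrow> (0 < y \<and> y < 1) \<and> y powr \<mu> < \<delta>1 \<and>
          4 * y powr (1 - \<mu>) < \<delta>' \<and> (\<mu> * ln (1/y)) powr \<theta> \<ge> K"
        unfolding eventually_at_right_field by auto
      have "b / 2 > 0" "b / 2 < b" using b(1) by auto
      from b(2)[OF this] that show ?thesis by blast
    qed
    have "hausdorff_content (\<lambda>x. x powr \<beta>) \<delta>' L \<le> ennreal \<epsilon>" if \<epsilon>: "\<epsilon> > 0" for \<epsilon>
    proof -
      define \<eta> where "\<eta> = min (r0 powr s) (sqrt (\<epsilon> / 16))"
      have eta: "\<eta> > 0" "\<eta> \<le> r0 powr s" "16 * \<eta>^2 \<le> \<epsilon>"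
      proof -
        show "\<eta> > 0" using r0 \<epsilon> by (simp add: \<eta>_def)
        show "\<eta> \<le> r0 powr s" by (simp add: \<eta>_def)
        have "\<eta>^2 \<le> (sqrt (\<epsilon> / 16))^2" using \<open>\<eta> > 0\<close> by (intro power_mono) (auto simp: \<eta>_def)
        thus "16 * \<eta>^2 \<le> \<epsilon>" using \<epsilon> by simp
      qed
      have "hausdorff_content (\<lambda>x. x powr s) r0 E \<le> hausdorff_measure (\<lambda>x. x powr s) E"
        unfolding hausdorff_measure_def using r0 by (intro SUP_upper) auto
      hence "hausdorff_content (\<lambda>x. x powr s) r0 E < ennreal \<eta>" using Hs eta by simp
      then obtain C where Ccov: "E \<subseteq> (\<Union>i. C i)" and Cb: "\<And>i. bounded (C i)" and Cd: "\<And>i. diameter (C i) < r0"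
        and Csum: "(\<Sum>i. ennreal (diameter (C i) powr s)) < ennreal \<eta>"
        unfolding hausdorff_content_def INF_less_iff by auto
      define \<rho> where "\<rho> i = (\<eta> / 2 ^ Suc i) powr (1 / s)" for i
      define r where "r i = max (diameter (C i)) (\<rho> i)" for i
      have rho_pos: "\<rho> i > 0" for i using eta by (simp add: \<rho>_def)
      have rho_s: "\<rho> i powr s = \<eta> / 2 ^ Suc i" for i using eta s0 by (simp add: \<rho>_def powr_powr)
      have rho_le: "\<rho> i \<le> r0" for i
      proof -
        have "(1::real) \<le> 2 * 2 ^ i" using one_le_power[of "2::real" i] by linarith
        hence "\<eta> / 2 ^ Suc i \<le> \<eta>" using eta by (simp add: field_simps)
        hence "\<rho> i \<le> (r0 powr s) powr (1 / s)" unfolding \<rho>_def using eta s0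
          by (intro powr_mono2) auto
        also have "\<dots> = r0" using s0 r0 by (simp add: powr_powr)
        finally show ?thesis .
      qed
      have dnn: "0 \<le> diameter (C i)" for i using Cb by (rule diameter_ge_0)
      have r_pos: "r i > 0" for i using rho_pos[of i] by (simp add: r_def)
      have r_le: "r i \<le> r0" for i using rho_le[of i] Cd[of i] by (simp add: r_def)
      have r_lt1: "r i < 1" for i using r_le[of i] r0 by simp
      have d_le_r: "diameter (C i) \<le> r i" for i by (simp add: r_def)
      have r_sum: "(\<Sum>i. ennreal (r i powr s)) \<le> ennreal (2 * \<eta>)"
      proof -
        have "(\<Sum>i. ennreal (r i powr s)) \<le> (\<Sum>i. ennreal (diameter (C i) powr s) + ennreal (\<eta> / 2 ^ Suc i))"
        proof (intro suminf_le summableI)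
          fix i
          have "r i powr s \<le> diameter (C i) powr s + \<rho> i powr s"
            by (cases "diameter (C i) \<le> \<rho> i") (auto simp: r_def max_def)
          hence "ennreal (r i powr s) \<le> ennreal (diameter (C i) powr s + \<eta> / 2 ^ Suc i)"
            using rho_s[of i] by (intro ennreal_leI) simp
          also have "\<dots> = ennreal (diameter (C i) powr s) + ennreal (\<eta> / 2 ^ Suc i)"
            using eta(1) by (intro ennreal_plus) auto
          finally show "ennreal (r i powr s) \<le> ennreal (diameter (C i) powr s) + ennreal (\<eta> / 2 ^ Suc i)" .
        qed
        also have "\<dots> = (\<Sum>i. ennreal (diameter (C i) powr s)) + (\<Sum>i. ennreal (\<eta> / 2 ^ Suc i))"
          by (rule suminf_add[symmetric]; rule summableI)
        also have "(\<Sum>i. ennreal (\<eta> / 2 ^ Suc i)) = ennreal \<eta>"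
        proof (rule suminf_ennreal_eq)
          have "(\<lambda>i. \<eta> * (1/2) ^ Suc i) sums (\<eta> * 1)" by (rule sums_mult[OF power_half_series])
          moreover have "\<eta> * (1/2) ^ Suc i = \<eta> / 2 ^ Suc i" for i by (simp only: power_one_over) simp
          ultimately show "(\<lambda>i. \<eta> / 2 ^ Suc i) sums \<eta>" by (simp add: mult.commute)
          show "\<And>i. 0 \<le> \<eta> / 2 ^ Suc i" using eta(1) by simp
        qed
        also have "(\<Sum>i. ennreal (diameter (C i) powr s)) + ennreal \<eta> \<le> ennreal \<eta> + ennreal \<eta>"
          using Csum by (intro add_right_mono) simp
        also have "\<dots> = ennreal (2 * \<eta>)" using eta by (simp add: ennreal_plus[symmetric] del: ennreal_plus)
        finally show ?thesis .
      qed
      define t where "t i = ln (r i) / ln r0" for i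
      have t1: "t i \<ge> 1" for i
      proof -
        have "ln (r i) \<le> ln r0" using r_le[of i] r_pos[of i] by simp
        moreover have "ln r0 < 0" using r0 by simp
        ultimately show ?thesis by (simp add: t_def le_divide_eq)
      qed
      have r_t: "r i = r0 powr t i" for i unfolding t_def using r0 r_pos by (simp add: r0_powr_t)
      define m where "m i = nat \<lfloor>ln (t i) / ln lam\<rfloor>" for i
      have mb: "lam ^ m i \<le> t i" "t i < lam ^ (m i + 1)" for i
        using block_bounds[OF lam1 t1[of i]] by (simp_all add: m_def)
      define M where "M i j = max (r i) (r j)" for i j
      have M_pos: "M i j > 0" for i j using r_pos[of i] by (simp add: M_def)
      have M_le: "M i j \<le> r0" for i j using r_le[of i] r_le[of j] by (simp add: M_def)
      have KB: "M i j \<le> r0 powr (lam ^ m i)" if "m i = m j" for i j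
      proof -
        have "r i \<le> r0 powr (lam ^ m i)" unfolding r_t using mb[of i] r0 by (intro powr_mono') auto
        moreover have "r j \<le> r0 powr (lam ^ m i)" unfolding r_t using mb[of j] r0 that by (intro powr_mono') auto
        ultimately show ?thesis by (simp add: M_def)
      qed
      have KC: "M i j powr ((1 - \<mu>) * \<beta>) \<le> r i powr s * r j powr s" if "m i = m j" for i j
      proof -
        have tj: "lam ^ m i \<le> t j" "t j < lam ^ (m i + 1)" using mb[of j] that by simp_all
        show ?thesis unfolding key_exp M_def r_t
          using pair_bound[OF r0(1,2) s0 lam_def lam1 mb(1,2)[of i] tj] by simp
      qed
      define A where "A i j = (if m i = m j then {u. \<exists>p\<in>C i. \<exists>q\<in>C j. M i j powr \<mu> \<le> dist p q \<and>
          u = (q - p) /\<^sub>R norm (q - p)} else {})" for i j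
      have A_sph: "A i j \<subseteq> sphere 0 1" for i j
      proof
        fix u assume "u \<in> A i j"
        then obtain p q where "M i j powr \<mu> \<le> dist p q" "u = (q - p) /\<^sub>R norm (q - p)"
          by (auto simp: A_def split: if_splits)
        moreover have "M i j powr \<mu> > 0" using M_pos[of i j] by simp
        ultimately have "q \<noteq> p" "u = (q - p) /\<^sub>R norm (q - p)" by auto
        thus "u \<in> sphere 0 1" by simp
      qed
      have A_bdd: "bounded (A i j)" for i j using A_sph bounded_sphere bounded_subset by blast
      have A_diam: "diameter (A i j) \<le> 4 * M i j powr (1 - \<mu>)" for i j
      proof (rule diameter_le)
        show "A i j \<noteq> {} \<or> 0 \<le> 4 * M i j powr (1 - \<mu>)" by simp
        fix u u' assume u: "u \<in> A i j" and u': "u' \<in> A i j"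
        from u obtain p q where pq: "p \<in> C i" "q \<in> C j" "M i j powr \<mu> \<le> dist p q" "u = (q - p) /\<^sub>R norm (q - p)"
          by (auto simp: A_def split: if_splits)
        from u' obtain p' q' where pq': "p' \<in> C i" "q' \<in> C j" "M i j powr \<mu> \<le> dist p' q'" "u' = (q' - p') /\<^sub>R norm (q' - p')"
          by (auto simp: A_def split: if_splits)
        have Mmu: "M i j powr \<mu> > 0" using M_pos[of i j] by simp
        have nv: "norm (q - p) \<ge> M i j powr \<mu>" using pq(3) by (simp add: dist_norm norm_minus_commute)
        have v0: "q - p \<noteq> 0" "q' - p' \<noteq> 0" using pq(3) pq'(3) Mmu by auto
        have "(q - p) - (q' - p') = (q - q') - (p - p')" by (simp add: algebra_simps)
        hence "norm ((q - p) - (q' - p')) \<le> norm (q - q') + norm (p - p')"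
          by (metis norm_triangle_ineq4)
        hence "norm ((q - p) - (q' - p')) \<le> dist q q' + dist p p'" by (simp add: dist_norm)
        also have "\<dots> \<le> r j + r i"
          using diameter_bounded_bound[OF Cb pq(2) pq'(2)] diameter_bounded_bound[OF Cb pq(1) pq'(1)]
            d_le_r[of i] d_le_r[of j] by linarith
        also have "\<dots> \<le> 2 * M i j" by (simp add: M_def)
        finally have nd: "norm ((q - p) - (q' - p')) \<le> 2 * M i j" .
        have "norm (u - u') \<le> 2 * norm ((q - p) - (q' - p')) / norm (q - p)"
          unfolding pq(4) pq'(4) by (rule unit_diff_le[OF v0])
        also have "\<dots> \<le> 2 * (2 * M i j) / (M i j powr \<mu>)"
          using nd nv Mmu M_pos[of i j] by (intro frac_le) auto
        also have "\<dots> = 4 * M i j powr (1 - \<mu>)"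
          using M_pos[of i j] by (simp add: powr_diff)
        finally show "norm (u - u') \<le> 4 * M i j powr (1 - \<mu>)" .
      qed
      have A_small: "diameter (A i j) < \<delta>'" for i j
      proof -
        have "M i j powr (1 - \<mu>) \<le> r0 powr (1 - \<mu>)" using M_le[of i j] M_pos[of i j] mu0
          by (intro powr_mono2) auto
        thus ?thesis using A_diam[of i j] r0(4) by linarith
      qed
      have A_cost: "ennreal (diameter (A i j) powr \<beta>) \<le> ennreal (4 * r i powr s) * ennreal (r j powr s)" for i j
      proof (cases "m i = m j")
        case False thus ?thesis by (simp add: A_def)
      next
        case True
        have "diameter (A i j) powr \<beta> \<le> (4 * M i j powr (1 - \<mu>)) powr \<beta>"
          using A_diam[of i j] diameter_ge_0[OF A_bdd] b0 by (intro powr_mono2) auto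
        also have "\<dots> = 4 powr \<beta> * M i j powr ((1 - \<mu>) * \<beta>)"
          using M_pos[of i j] by (simp add: powr_mult powr_powr)
        also have "\<dots> \<le> 4 * (r i powr s * r j powr s)"
        proof (rule mult_mono)
          show "4 powr \<beta> \<le> 4" using powr_mono[OF b1, of 4] by simp
        qed (use KC[OF True] in auto)
        finally show ?thesis by (simp add: ennreal_mult[symmetric] del: ennreal_mult)
      qed
      have Lcov: "L \<subseteq> (\<Union>n. A (fst (prod_decode n)) (snd (prod_decode n)))"
      proof
        fix e assume eL: "e \<in> L"
        show "e \<in> (\<Union>n. A (fst (prod_decode n)) (snd (prod_decode n)))"
        proof (rule ccontr)
          assume "\<not> ?thesis"
          hence nA: "e \<notin> A i j" for i j
            using prod_encode_inverse[of "(i,j)"] by (metis UN_I UNIV_I fst_conv snd_conv)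
          obtain a tt where tt: "tt > 0" and cont: "\<And>\<delta>. 0 < \<delta> \<Longrightarrow> \<delta> < \<delta>E \<Longrightarrow>
              hausdorff_content h \<delta> (closed_segment a (a + tt *\<^sub>R e) \<inter> E) > 1"
            using seg[OF eL] by blast
          define S where "S = closed_segment a (a + tt *\<^sub>R e) \<inter> E"
          have e1: "norm e = 1" using Lsph eL by auto
          define U where "U k = {x\<in>S. \<exists>i. m i = k \<and> x \<in> C i}" for k
          have U_cov: "S \<subseteq> (\<Union>k. U k)"
          proof
            fix x assume x: "x \<in> S"
            then obtain i where "x \<in> C i" using Ccov by (auto simp: S_def)
            thus "x \<in> (\<Union>k. U k)" using x by (auto simp: U_def)
          qed
          have U_bdd: "bounded (U k)" for k
            by (rule bounded_subset[OF bounded_closed_segment[of a "a + tt *\<^sub>R e"]]) (auto simp: U_def S_def)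
          have segpt: "\<exists>u. x = a + u *\<^sub>R e" if "x \<in> U k" for x k
          proof -
            from that have "x \<in> closed_segment a (a + tt *\<^sub>R e)" by (auto simp: U_def S_def)
            then obtain v where "x = (1 - v) *\<^sub>R a + v *\<^sub>R (a + tt *\<^sub>R e)" by (auto simp: closed_segment_def)
            hence "x = a + (v * tt) *\<^sub>R e" by (simp add: algebra_simps)
            thus ?thesis by blast
          qed
          have U_pair: "dist x y \<le> r0 powr (\<mu> * lam ^ k)" if xU: "x \<in> U k" and yU: "y \<in> U k" for x y k
          proof -
            obtain i where i: "m i = k" "x \<in> C i" using xU by (auto simp: U_def)
            obtain j where j: "m j = k" "y \<in> C j" using yU by (auto simp: U_def)
            obtain u1 where u1: "x = a + u1 *\<^sub>R e" using segpt[OF xU] by blast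
            obtain u2 where u2: "y = a + u2 *\<^sub>R e" using segpt[OF yU] by blast
            have Mmu: "M i j powr \<mu> > 0" using M_pos[of i j] by simp
            have "dist x y < M i j powr \<mu>"
            proof (rule ccontr)
              assume "\<not> dist x y < M i j powr \<mu>"
              hence big: "M i j powr \<mu> \<le> dist x y" by simp
              consider "u1 < u2" | "u2 < u1" | "u1 = u2" by linarith
              thus False
              proof cases
                case 1
                have yx: "y - x = (u2 - u1) *\<^sub>R e" by (simp add: u1 u2 algebra_simps)
                have "norm (y - x) = u2 - u1" using 1 e1 by (simp add: yx)
                hence "(y - x) /\<^sub>R norm (y - x) = e" using 1 by (simp add: yx)
                hence "e \<in> A i j" using i j big by (auto simp: A_def)
                thus False using nA by blast
              next
                case 2
                have xy: "x - y = (u1 - u2) *\<^sub>R e" by (simp add: u1 u2 algebra_simps)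
                have "norm (x - y) = u1 - u2" using 2 e1 by (simp add: xy)
                hence "(x - y) /\<^sub>R norm (x - y) = e" using 2 by (simp add: xy)
                moreover have "M j i powr \<mu> \<le> dist y x" using big by (simp add: M_def max.commute dist_commute)
                ultimately have "e \<in> A j i" using i j by (auto simp: A_def)
                thus False using nA by blast
              next
                case 3
                hence "x = y" by (simp add: u1 u2)
                thus False using big Mmu by simp
              qed
            qed
            also have "M i j powr \<mu> \<le> (r0 powr (lam ^ k)) powr \<mu>"
              using KB[of i j] i j M_pos[of i j] mu0 by (intro powr_mono2) auto
            also have "\<dots> = r0 powr (\<mu> * lam ^ k)" by (simp add: powr_powr mult.commute)
            finally show ?thesis by simp
          qed
          have U_diam: "diameter (U k) \<le> r0 powr (\<mu> * lam ^ k)" for k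
            by (rule diameter_le) (use U_pair in \<open>auto simp: dist_norm\<close>)
          have xk_le: "r0 powr (\<mu> * lam ^ k) \<le> r0 powr \<mu>" for k
          proof -
            have "1 \<le> lam ^ k" using lam1 by (simp add: one_le_power)
            hence "\<mu> \<le> \<mu> * lam ^ k" using mu0 by simp
            thus ?thesis using r0 by (intro powr_mono') auto
          qed
          have U_small: "diameter (U k) < \<delta>1" for k using U_diam[of k] xk_le[of k] r0(3) by linarith
          define c where "c = 1 / (\<mu> * ln (1 / r0)) powr \<theta>"
          have Lpos: "ln (1 / r0) > 0" using r0 by simp
          have hx: "h (r0 powr (\<mu> * lam ^ k)) = c * q ^ k" for k
          proof -
            have xpos: "r0 powr (\<mu> * lam ^ k) > 0" using r0 by simp
            have xlt: "r0 powr (\<mu> * lam ^ k) < \<epsilon>0" using xk_le[of k] r0(3) d1 by linarith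
            have "ln (1 / r0 powr (\<mu> * lam ^ k)) = (\<mu> * ln (1 / r0)) * lam ^ k"
              using r0 by (simp add: ln_powr ln_div)
            hence "h (r0 powr (\<mu> * lam ^ k)) = 1 / ((\<mu> * ln (1 / r0)) * lam ^ k) powr \<theta>"
              using hform[OF xpos xlt] by simp
            also have "((\<mu> * ln (1 / r0)) * lam ^ k) powr \<theta> = (\<mu> * ln (1 / r0)) powr \<theta> * (lam powr \<theta>) ^ k"
              using mu0 Lpos lam1 by (simp add: powr_mult pow_powr)
            also have "1 / ((\<mu> * ln (1 / r0)) powr \<theta> * (lam powr \<theta>) ^ k) = c * q ^ k"
              by (simp add: c_def q_def power_one_over)
            finally show ?thesis .
          qed
          have c0: "c > 0" using mu0 Lpos by (simp add: c_def)
          have "hausdorff_content h \<delta>1 S \<le> (\<Sum>k. ennreal (h (diameter (U k))))"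
            by (rule content_le[OF U_cov U_bdd U_small])
          also have "\<dots> \<le> (\<Sum>k. ennreal (c * q ^ k))"
          proof (intro suminf_le summableI ennreal_leI)
            fix k
            have "h (diameter (U k)) \<le> h (r0 powr (\<mu> * lam ^ k))"
              using U_diam[of k] diameter_ge_0[OF U_bdd[of k]] by (intro mono_onD[OF hmono]) auto
            thus "h (diameter (U k)) \<le> c * q ^ k" using hx[of k] by simp
          qed
          also have "\<dots> = ennreal (c * (1 / (1 - q)))"
          proof (rule suminf_ennreal_eq)
            have "(\<lambda>k. q ^ k) sums (1 / (1 - q))" using geometric_sums[of q] q01 by simp
            thus "(\<lambda>k. c * q ^ k) sums (c * (1 / (1 - q)))" by (rule sums_mult)
            show "\<And>k. 0 \<le> c * q ^ k" using c0 q01 by simp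
          qed
          also have "\<dots> \<le> 1"
          proof -
            have Kpos: "K > 0" using q01 by (simp add: K_def)
            have Ppos: "(\<mu> * ln (1 / r0)) powr \<theta> > 0" using r0(5) Kpos by linarith
            have "c \<le> 1 / K" unfolding c_def using r0(5) Kpos Ppos by (intro divide_left_mono) auto
            hence "c * K \<le> 1" using Kpos by (simp add: field_simps)
            thus ?thesis by (simp add: K_def[symmetric])
          qed
          finally have "hausdorff_content h \<delta>1 S \<le> 1" .
          thus False using cont[OF d1(1) d1(2)] unfolding S_def by simp
        qed
      qed
      have "hausdorff_content (\<lambda>x. x powr \<beta>) \<delta>' L
          \<le> (\<Sum>n. ennreal (diameter (A (fst (prod_decode n)) (snd (prod_decode n))) powr \<beta>))"
        by (rule content_le[OF Lcov A_bdd A_small])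
      also have "\<dots> \<le> (\<Sum>p. ennreal (4 * r p powr s)) * (\<Sum>q. ennreal (r q powr s))"
        by (rule prod_sum_le[where F = "\<lambda>pq. ennreal (diameter (A (fst pq) (snd pq)) powr \<beta>)", simplified])
           (rule A_cost)
      also have "(\<Sum>p. ennreal (4 * r p powr s)) = 4 * (\<Sum>p. ennreal (r p powr s))"
        by (simp add: ennreal_mult)
      also have "4 * (\<Sum>p. ennreal (r p powr s)) * (\<Sum>q. ennreal (r q powr s))
          \<le> 4 * ennreal (2 * \<eta>) * ennreal (2 * \<eta>)"
        using r_sum by (intro mult_mono) auto
      also have "\<dots> = ennreal (4 * (2 * \<eta>) * (2 * \<eta>))" using eta
        by (simp add: ennreal_mult mult_ac)
      also have "4 * (2 * \<eta>) * (2 * \<eta>) = 16 * \<eta>^2" by (simp add: power2_eq_square)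
      also have "\<dots> \<le> ennreal \<epsilon>" using eta by (intro ennreal_leI) simp
      finally show ?thesis .
    qed
    thus ?thesis by (metis ennreal_le_epsilon add_0 le_zero_eq)
  qed
  hence "hausdorff_measure (\<lambda>x. x powr \<beta>) L = 0" unfolding hausdorff_measure_def by simp
  thus False using HL by simp
qed



theorem corollary4p7:
  fixes \<theta> \<beta> :: real and h :: "real \<Rightarrow> real" and E :: "(real^2) set"
  assumes "\<theta> > 0" and "0 < \<beta>" and "\<beta> \<le> 1"
    and "h 0 = 0" and "mono_on {0..} h"
    and "\<exists>\<epsilon>>0. \<forall>x. 0 < x \<and> x < \<epsilon> \<longrightarrow> h x = 1 / (ln (1 / x)) powr \<theta>"
    and "F_hg_set h (\<lambda>x. x powr \<beta>) E"
  shows "hausdorff_dim E \<ge> \<beta> / 2"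
proof -
  obtain \<epsilon>0 where e0: "\<epsilon>0 > 0" and hf: "\<And>x. 0 < x \<Longrightarrow> x < \<epsilon>0 \<Longrightarrow> h x = 1 / (ln (1 / x)) powr \<theta>"
    using assms(6) by blast
  obtain L \<delta>E where L: "L \<subseteq> sphere 0 1" "hausdorff_measure (\<lambda>x. x powr \<beta>) L > 0" "\<delta>E > 0"
    and seg: "\<And>e. e \<in> L \<Longrightarrow> \<exists>a t. t > 0 \<and> (\<forall>\<delta>. 0 < \<delta> \<and> \<delta> < \<delta>E \<longrightarrow>
              hausdorff_content h \<delta> (closed_segment a (a + t *\<^sub>R e) \<inter> E) > 1)"
    using assms(7) unfolding F_hg_set_def by blast
  let ?S = "{s::real. 0 < s \<and> hausdorff_measure (\<lambda>x. x powr s) E = 0}"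
  have ne: "?S \<noteq> {}" using dim_set_nonempty[of E] by force
  have lb: "\<beta> / 2 \<le> s" if "s \<in> ?S" for s
  proof (rule ccontr)
    assume "\<not> \<beta> / 2 \<le> s"
    hence "s < \<beta> / 2" by simp
    with that show False
      using main_contra[OF assms(1,2,3,5) e0 hf L(1,2,3) seg] by blast
  qed
  show ?thesis unfolding hausdorff_dim_def by (rule cInf_greatest[OF ne]) (use lb in blast)
qed


end
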